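(* Let $X$ be a finite poset and let $f\colon X\to\mathbb R$ be a Morse function satisfying the Exclusion condition. Then the associated set $\mathcal M_f=\{(w,x)\in X\times X: w\prec x,\ f(w)\ge f(x)\}$ is a Morse matching on $X$ whose set of critical points equals the set of critical points of $f$. In particular, if $X$ is a finite two-wide poset and $f\colon X\to\mathbb R$ is any Morse function, then $\mathcal M_f$ is a Morse matching with $\mathrm{crit}(f)=\mathrm{crit}(\mathcal M_f)$.
   Context: In a poset, write $a\prec b$ if $a<b$ and there is no $c$ with $a<c<b$; the Hasse diagram $\mathcal H(X)$ is the directed graph with edges $a\to b$ for $a\prec b$. A Morse function on a finite poset $X$ is a map $f\colon X\to\mathbb R$ such that for every $x\in X$, $\#\{y: x\prec y,\ f(x)\ge f(y)\}\le1$ and $\#\{w: w\prec x,\ f(w)\ge f(x)\}\le 1$; $x$ is critical if both sets are empty, regular otherwise; $\mathrm{crit}(f)$ is the set of critical points. $f$ satisfies the Exclusion condition if for every regular $x$ exactly one of these two sets is nonempty. A matching on $X$ is a set $\mathcal M\subseteq X\times X$ such that $(x,y)\in\mathcal M$ implies $x\prec y$ and each element of $X$ belongs to at most one pair of $\mathcal M$. Let $\mathcal H_{\mathcal M}(X)$ be the directed graph obtained from $\mathcal H(X)$ by reversing the edges not in $\mathcal M$; $\mathcal M$ is a Morse matching if $\mathcal H_{\mathcal M}(X)$ has no directed cycles. The critical points $\mathrm{crit}(\mathcal M)$ are the elements not belonging to any pair of $\mathcal M$. A poset is two-wide if for any $x\prec z\prec y$ there is $z'\neq z$ with $x\prec z'\prec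 y$. *)

theory Defs
  imports Complex_Main
begin

text \<open>A finite poset is modelled as a finite carrier set X inside a type of class order,
  with the induced order. Covering relation within X.\<close>

definition covers :: "'a::order set \<Rightarrow> 'a \<Rightarrow> 'a \<Rightarrow> bool" where
  "covers X a b \<longleftrightarrow> a \<in> X \<and> b \<in> X \<and> a < b \<and> \<not> (\<exists>c\<in>X. a < c \<and> c < b)"

definition hasse :: "'a::order set \<Rightarrow> ('a \<times> 'a) set" where
  "hasse X = {(a, b). covers X a b}"

definition up_low :: "'a::order set \<Rightarrow> ('a \<Rightarrow> real) \<Rightarrow> 'a \<Rightarrow> 'a set" where
  "up_low X f x = {y. covers X x y \<and> f x \<ge> f y}"

definition down_high :: "'a::order set \<Rightarrow> ('a \<Rightarrow> real) \<Rightarrow> 'a \<Rightarrow> 'a set" where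
  "down_high X f x = {w. covers X w x \<and> f w \<ge> f x}"

definition morse_function :: "'a::order set \<Rightarrow> ('a \<Rightarrow> real) \<Rightarrow> bool" where
  "morse_function X f \<longleftrightarrow>
     (\<forall>x\<in>X. card (up_low X f x) \<le> 1 \<and> card (down_high X f x) \<le> 1)"

definition crit_fun :: "'a::order set \<Rightarrow> ('a \<Rightarrow> real) \<Rightarrow> 'a set" where
  "crit_fun X f = {x\<in>X. up_low X f x = {} \<and> down_high X f x = {}}"

definition regular_fun :: "'a::order set \<Rightarrow> ('a \<Rightarrow> real) \<Rightarrow> 'a \<Rightarrow> bool" where
  "regular_fun X f x \<longleftrightarrow> x \<in> X \<and> x \<notin> crit_fun X f"

definition exclusion :: "'a::order set \<Rightarrow> ('a \<Rightarrow> real) \<Rightarrow> bool" where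
  "exclusion X f \<longleftrightarrow>
     (\<forall>x. regular_fun X f x \<longrightarrow> ((up_low X f x \<noteq> {}) \<noteq> (down_high X f x \<noteq> {})))"

definition matching :: "'a::order set \<Rightarrow> ('a \<times> 'a) set \<Rightarrow> bool" where
  "matching X M \<longleftrightarrow>
     (\<forall>(x, y)\<in>M. covers X x y) \<and>
     (\<forall>z. card {p\<in>M. fst p = z \<or> snd p = z} \<le> 1)"

definition hasse_M :: "'a::order set \<Rightarrow> ('a \<times> 'a) set \<Rightarrow> ('a \<times> 'a) set" where
  "hasse_M X M = M \<union> {(b, a). (a, b) \<in> hasse X \<and> (a, b) \<notin> M}"

definition morse_matching :: "'a::order set \<Rightarrow> ('a \<times> 'a) set \<Rightarrow> bool" where
  "morse_matching X M \<longleftrightarrow> matching X M \<and> acyclic (hasse_M X M)"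

definition crit_matching :: "'a::order set \<Rightarrow> ('a \<times> 'a) set \<Rightarrow> 'a set" where
  "crit_matching X M = {x\<in>X. \<forall>p\<in>M. fst p \<noteq> x \<and> snd p \<noteq> x}"

definition assoc_matching :: "'a::order set \<Rightarrow> ('a \<Rightarrow> real) \<Rightarrow> ('a \<times> 'a) set" where
  "assoc_matching X f = {(w, x). covers X w x \<and> f w \<ge> f x}"

definition two_wide :: "'a::order set \<Rightarrow> bool" where
  "two_wide X \<longleftrightarrow>
     (\<forall>x z y. covers X x z \<and> covers X z y \<longrightarrow> (\<exists>z'. z' \<noteq> z \<and> covers X x z' \<and> covers X z' y))"

end

theory Submission
  imports Defs
begin

lemma le1_eq:
  assumes "finite A" "card A \<le> 1" "a \<in> A" "b \<in> A" shows "a = b"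
  using assms card_le_Suc0_iff_eq[of A] by auto

lemma up_low_fin: "finite X \<Longrightarrow> finite (up_low X f x)"
  by (rule finite_subset[of _ X]) (auto simp: up_low_def covers_def)

lemma down_high_fin: "finite X \<Longrightarrow> finite (down_high X f x)"
  by (rule finite_subset[of _ X]) (auto simp: down_high_def covers_def)

lemma acyc:
  fixes X :: "'a::order set"
  shows "acyclic (hasse_M X (assoc_matching X f))"
proof -
  let ?R = "hasse_M X (assoc_matching X f)"
  have edge: "f y < f x \<or> (f y \<le> f x \<and> x < y)" if "(x,y) \<in> ?R" for x y
    using that by (auto simp: hasse_M_def assoc_matching_def hasse_def covers_def)
  have tr: "f y < f x \<or> (f y \<le> f x \<and> x < y)" if "(x,y) \<in> ?R\<^sup>+" for x y
    using that
  proof (induction rule: trancl_induct)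
    case (base y) then show ?case by (rule edge)
  next
    case (step y z)
    from edge[OF step(2)] step(3) show ?case
      by (auto dest: order.strict_trans)
  qed
  show ?thesis unfolding acyclic_def using tr by fastforce
qed

lemma part1:
  fixes X :: "'a::order set"
  assumes fin: "finite X" and mf: "morse_function X f" and ex: "exclusion X f"
  shows "morse_matching X (assoc_matching X f) \<and>
            crit_matching X (assoc_matching X f) = crit_fun X f"
proof -
  let ?M = "assoc_matching X f"
  have nb: "\<not> (up_low X f z \<noteq> {} \<and> down_high X f z \<noteq> {})" for z
  proof
    assume h: "up_low X f z \<noteq> {} \<and> down_high X f z \<noteq> {}"
    then have "z \<in> X" by (auto simp: up_low_def covers_def)
    then have "regular_fun X f z" using h by (auto simp: regular_fun_def crit_fun_def)
    then show False using ex h unfolding exclusion_def by blast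
  qed
  have m: "matching X ?M"
    unfolding matching_def
  proof (intro conjI allI)
    show "\<forall>(x, y)\<in>?M. covers X x y" by (auto simp: assoc_matching_def)
  next
    fix z
    let ?S = "{p\<in>?M. fst p = z \<or> snd p = z}"
    have fS: "finite ?S"
      by (rule finite_subset[of _ "X \<times> X"]) (auto simp: assoc_matching_def covers_def fin)
    have "\<forall>p\<in>?S. \<forall>q\<in>?S. p = q"
    proof (intro ballI)
      fix p q assume p: "p \<in> ?S" and q: "q \<in> ?S"
      obtain a b where pab: "p = (a,b)" by (cases p)
      obtain c d where qcd: "q = (c,d)" by (cases q)
      have cv1: "covers X a b \<and> f a \<ge> f b" using p pab by (auto simp: assoc_matching_def)
      have cv2: "covers X c d \<and> f c \<ge> f d" using q qcd by (auto simp: assoc_matching_def)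
      have zX: "z \<in> X" using p pab cv1 by (auto simp: covers_def)
      have c1: "card (up_low X f z) \<le> 1" "card (down_high X f z) \<le> 1"
        using mf zX by (auto simp: morse_function_def)
      show "p = q"
      proof (cases "a = z")
        case True
        show ?thesis
        proof (cases "c = z")
          case True
          have "b \<in> up_low X f z" "d \<in> up_low X f z" using cv1 cv2 \<open>a = z\<close> True
            by (auto simp: up_low_def)
          then have "b = d" using le1_eq[OF up_low_fin[OF fin] c1(1)] by blast
          then show ?thesis using pab qcd True \<open>a = z\<close> by simp
        next
          case False
          then have "d = z" using q qcd by auto
          then have "b \<in> up_low X f z" "c \<in> down_high X f z" using cv1 cv2 \<open>a = z\<close>
            by (auto simp: up_low_def down_high_def)
          then show ?thesis using nb[of z] by blast
        qed
      next
        case False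
        then have bz: "b = z" using p pab by auto
        show ?thesis
        proof (cases "c = z")
          case True
          then have "d \<in> up_low X f z" "a \<in> down_high X f z" using cv1 cv2 bz
            by (auto simp: up_low_def down_high_def)
          then show ?thesis using nb[of z] by blast
        next
          case False
          then have "d = z" using q qcd by auto
          then have "a \<in> down_high X f z" "c \<in> down_high X f z" using cv1 cv2 bz
            by (auto simp: down_high_def)
          then have "a = c" using le1_eq[OF down_high_fin[OF fin] c1(2)] by blast
          then show ?thesis using pab qcd bz \<open>d = z\<close> by simp
        qed
      qed
    qed
    then have "card ?S \<le> Suc 0" using card_le_Suc0_iff_eq[OF fS] by blast
    then show "card ?S \<le> 1" by simp
  qed
  have c: "crit_matching X ?M = crit_fun X f"
    by (auto simp: crit_matching_def crit_fun_def assoc_matching_def up_low_def down_high_def)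
  show ?thesis using m c acyc[of X f] by (simp add: morse_matching_def)
qed

lemma tw_excl:
  fixes X :: "'a::order set"
  assumes fin: "finite X" and tw: "two_wide X" and mf: "morse_function X f"
  shows "exclusion X f"
  unfolding exclusion_def
proof (intro allI impI)
  fix x assume "regular_fun X f x"
  show "(up_low X f x \<noteq> {}) \<noteq> (down_high X f x \<noteq> {})"
  proof (rule ccontr)
    assume "\<not> ?thesis"
    moreover have "\<not> (up_low X f x = {} \<and> down_high X f x = {})"
      using \<open>regular_fun X f x\<close> by (auto simp: regular_fun_def crit_fun_def)
    ultimately obtain y w where y: "y \<in> up_low X f x" and w: "w \<in> down_high X f x" by blast
    have cy: "covers X x y" "f x \<ge> f y" using y by (auto simp: up_low_def)
    have cw: "covers X w x" "f w \<ge> f x" using w by (auto simp: down_high_def)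
    obtain z where z: "z \<noteq> x" "covers X w z" "covers X z y"
      using tw cy cw unfolding two_wide_def by blast
    have wX: "w \<in> X" "y \<in> X" using cw cy by (auto simp: covers_def)
    have c1: "card (up_low X f w) \<le> 1" "card (down_high X f y) \<le> 1"
      using mf wX by (auto simp: morse_function_def)
    have "x \<in> up_low X f w" using cw by (auto simp: up_low_def)
    then have "z \<notin> up_low X f w" using le1_eq[OF up_low_fin[OF fin] c1(1)] z(1) by blast
    then have a: "f w < f z" using z(2) by (auto simp: up_low_def)
    have "x \<in> down_high X f y" using cy by (auto simp: down_high_def)
    then have "z \<notin> down_high X f y" using le1_eq[OF down_high_fin[OF fin] c1(2)] z(1) by blast
    then have b: "f z < f y" using z(3) by (auto simp: down_high_def)
    show False using a b cy cw by linarith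
  qed
qed

theorem mainTheorem6:
  fixes X :: "'a::order set"
  assumes "finite X"
  shows "(\<forall>f. morse_function X f \<and> exclusion X f \<longrightarrow>
            morse_matching X (assoc_matching X f) \<and>
            crit_matching X (assoc_matching X f) = crit_fun X f)
       \<and> (two_wide X \<longrightarrow> (\<forall>f. morse_function X f \<longrightarrow>
            morse_matching X (assoc_matching X f) \<and>
            crit_fun X f = crit_matching X (assoc_matching X f)))"
proof (rule conjI; intro allI impI)
  fix f assume "morse_function X f \<and> exclusion X f"
  then show "morse_matching X (assoc_matching X f) \<and>
            crit_matching X (assoc_matching X f) = crit_fun X f"
    using part1[OF assms] by blast
next
  fix f assume "two_wide X" "morse_function X f"
  then have "exclusion X f" using tw_excl[OF assms] by blast
  then show "morse_matching X (assoc_matching X f) \<and>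
            crit_fun X f = crit_matching X (assoc_matching X f)"
    using part1[OF assms \<open>morse_function X f\<close>] by simp
qed

end
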